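(* Let $C_{\mathsf{Bern}}>0$. There exist constants $c>0$ and $N_0$, depending only on $C_{\mathsf{Bern}}$, such that for every $n\ge N_0$ and every function $f\colon\{0,1\}^n\to\mathbb R$ satisfying \[\sup_{p\in[0,1]}\mathbb E_{X\sim\mathrm{Bern}(p)^{\otimes n}}|f(X)-p|\le\frac{C_{\mathsf{Bern}}}{\sqrt n},\] and every $\eta\in(0,1)$ with $\lfloor\eta n\rfloor\ge1$, we have \[\sup_{p\in[0,1]}\mathbb E_{X\sim\mathrm{Bern}(p)^{\otimes n}}[S^f_\eta(X)]\ge c\,\eta.\]
   Context: For $x,y\in\{0,1\}^n$, $d_H(x,y)=\#\{i: x_i\ne y_i\}$. For $f\colon\{0,1\}^n\to\mathbb R$ and $\eta\in(0,1)$, $S^f_\eta(x)=\sup_{y\in\{0,1\}^n\colon d_H(x,y)\le\lfloor\eta n\rfloor}|f(y)-f(x)|$. *)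

theory Defs
  imports "HOL-Analysis.Analysis"
begin

text \<open>Points of the cube {0,1}^n are encoded as subsets x of {..<n}
  (x = set of coordinates equal to 1).\<close>

definition cube :: "nat \<Rightarrow> nat set set" where
  "cube n = Pow {..<n}"

definition hamming :: "nat set \<Rightarrow> nat set \<Rightarrow> nat" where
  "hamming x y = card ((x - y) \<union> (y - x))"

definition bern_weight :: "nat \<Rightarrow> real \<Rightarrow> nat set \<Rightarrow> real" where
  "bern_weight n p x = p ^ card x * (1 - p) ^ (n - card x)"

definition bern_exp :: "nat \<Rightarrow> real \<Rightarrow> (nat set \<Rightarrow> real) \<Rightarrow> real" where
  "bern_exp n p g = (\<Sum>x\<in>cube n. bern_weight n p x * g x)"

text \<open>Sensitivity S^f_\<eta>(x) = sup over y in the cube with d_H(x,y) \<le> floor(\<eta> n)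
  of |f y - f x| (the set is finite and nonempty since it contains x).\<close>
definition sens :: "nat \<Rightarrow> real \<Rightarrow> (nat set \<Rightarrow> real) \<Rightarrow> nat set \<Rightarrow> real" where
  "sens n \<eta> f x = Max ((\<lambda>y. \<bar>f y - f x\<bar>) ` {y \<in> cube n. real (hamming x y) \<le> of_int \<lfloor>\<eta> * real n\<rfloor>})"

end

theory Submission
  imports Defs
begin

lemma beta_nat:
  "((\<lambda>t::real. t^a * (1-t)^b) has_integral (fact a * fact b / fact (a+b+1))) {0..1}"
proof -
  have "((\<lambda>t. t powr (real (a+1) - 1) * (1 - t) powr (real (b+1) - 1)) has_integral Beta (real (a+1)) (real (b+1))) {0..1}"
    by (rule has_integral_Beta_real) auto
  hence h: "((\<lambda>t. t powr (real (a+1) - 1) * (1 - t) powr (real (b+1) - 1)) has_integral Beta (real (a+1)) (real (b+1))) {0<..<1}"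
    by (simp only: has_integral_Icc_iff_Ioo)
  have "((\<lambda>t::real. t^a * (1-t)^b) has_integral Beta (real (a+1)) (real (b+1))) {0<..<1}"
    apply (rule has_integral_cong[THEN iffD1, OF _ h])
    by (simp add: powr_realpow)
  moreover have "Beta (real (a+1)) (real (b+1)) = fact a * fact b / fact (a+b+1)"
  proof -
    have "Beta (real (a+1)) (real (b+1)) = Gamma (1 + real a) * Gamma (1 + real b) / Gamma (1 + real (a+b+1))"
      by (simp add: Beta_def add_ac)
    also have "\<dots> = fact a * fact b / fact (a+b+1)"
      by (simp only: Gamma_fact)
    finally show ?thesis .
  qed
  ultimately show ?thesis by (simp add: has_integral_Icc_iff_Ioo)
qed


lemma bw_cont: "continuous_on S (\<lambda>p. bern_weight n p x)"
  unfolding bern_weight_def by (intro continuous_intros)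

lemma bw_nonneg: "p \<in> {0..1} \<Longrightarrow> 0 \<le> bern_weight n p x"
  unfolding bern_weight_def by auto

lemma bw_le1: "p \<in> {0..1} \<Longrightarrow> bern_weight n p x \<le> 1"
  unfolding bern_weight_def by (auto intro!: mult_le_one power_le_one)

lemma bw_int: "card x \<le> n \<Longrightarrow>
  ((\<lambda>p. bern_weight n p x) has_integral (fact (card x) * fact (n - card x) / fact (n+1))) {0..1}"
  using beta_nat[of "card x" "n - card x"] unfolding bern_weight_def by simp

lemma bw_int_p: "card x \<le> n \<Longrightarrow>
  ((\<lambda>p. bern_weight n p x * p) has_integral (fact (card x + 1) * fact (n - card x) / fact (n+2))) {0..1}"
proof -
  assume a: "card x \<le> n"
  have e: "card x + 1 + (n - card x) + 1 = n + 2" using a by simp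
  have h: "((\<lambda>p::real. p ^ (card x + 1) * (1 - p) ^ (n - card x)) has_integral (fact (card x + 1) * fact (n - card x) / fact (n+2))) {0..1}"
    using beta_nat[of "card x + 1" "n - card x"] unfolding e .
  show ?thesis
    by (rule has_integral_cong[THEN iffD1, OF _ h]) (simp add: bern_weight_def algebra_simps)
qed

lemma cube_finite: "finite (cube n)"
  unfolding cube_def by simp

lemma cube_card: "x \<in> cube n \<Longrightarrow> card x \<le> n"
  unfolding cube_def by (metis PowD card_lessThan card_mono finite_lessThan)

definition wt :: "nat \<Rightarrow> nat set \<Rightarrow> real" where
  "wt n x = fact (card x) * fact (n - card x) / fact (n+1)"

lemma int_bern_exp:
  "((\<lambda>p. bern_exp n p g) has_integral (\<Sum>x\<in>cube n. wt n x * g x)) {0..1}"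
  unfolding bern_exp_def wt_def
  by (intro has_integral_sum cube_finite has_integral_mult_left bw_int cube_card) 

lemma sup_ge_int:
  assumes "\<And>x. x \<in> cube n \<Longrightarrow> g x \<ge> 0"
  shows "(\<Sum>x\<in>cube n. wt n x * g x) \<le> (SUP p\<in>{0..1::real}. bern_exp n p g)"
proof -
  have bdd: "bdd_above ((\<lambda>p. bern_exp n p g) ` {0..1})"
  proof (rule bdd_aboveI2)
    fix p :: real assume "p \<in> {0..1}"
    then show "bern_exp n p g \<le> (\<Sum>x\<in>cube n. g x)"
      unfolding bern_exp_def
      by (intro sum_mono) (metis assms bw_le1 mult_left_le_one_le bw_nonneg)
  qed
  have c: "((\<lambda>p. c) has_integral c) {0..1::real}" for c :: real
    using has_integral_const_real[of c 0 1] by simp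
  have "((\<lambda>q::real. SUP p\<in>{0..1::real}. bern_exp n p g) has_integral (SUP p\<in>{0..1::real}. bern_exp n p g)) {0..1}"
    by (rule c)
  then show ?thesis
    by (rule has_integral_le[OF int_bern_exp]) (intro cSUP_upper bdd)
qed

lemma m_eq: "card x \<le> n \<Longrightarrow> fact (card x + 1) * fact (n - card x) / fact (n+2) = wt n x * (real (card x) + 1) / (real n + 2)"
  unfolding wt_def by (simp add: numeral_2_eq_2 field_simps)

lemma hyp_int:
  assumes h: "\<forall>p\<in>{0..1}. bern_exp n p (\<lambda>x. \<bar>f x - p\<bar>) \<le> B"
  shows "(\<Sum>x\<in>cube n. \<bar>f x * wt n x - wt n x * (real (card x) + 1) / (real n + 2)\<bar>) \<le> B"
proof -
  have c: "((\<lambda>p. c) has_integral c) {0..1::real}" for c :: real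
    using has_integral_const_real[of c 0 1] by simp
  define J where "J x = integral {0..1} (\<lambda>p. bern_weight n p x * \<bar>f x - p\<bar>)" for x
  have IJ: "((\<lambda>p. bern_weight n p x * \<bar>f x - p\<bar>) has_integral J x) {0..1}" for x
    unfolding J_def
    by (intro integrable_integral integrable_continuous_real continuous_intros bw_cont)
  have "((\<lambda>p. \<Sum>x\<in>cube n. bern_weight n p x * \<bar>f x - p\<bar>) has_integral (\<Sum>x\<in>cube n. J x)) {0..1}"
    by (intro has_integral_sum cube_finite IJ)
  hence sJ: "(\<Sum>x\<in>cube n. J x) \<le> B"
    by (rule has_integral_le[OF _ c]) (use h in \<open>auto simp: bern_exp_def\<close>)
  have "\<bar>f x * wt n x - wt n x * (real (card x) + 1) / (real n + 2)\<bar> \<le> J x" if x: "x \<in> cube n" for x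
  proof -
    have cx: "card x \<le> n" using cube_card x by auto
    have a: "((\<lambda>p. bern_weight n p x * (f x - p)) has_integral (f x * wt n x - wt n x * (real (card x) + 1) / (real n + 2))) {0..1}"
      using has_integral_diff[OF has_integral_mult_right[OF bw_int[OF cx], of "f x"] bw_int_p[OF cx]]
      unfolding m_eq[OF cx] by (simp add: wt_def algebra_simps)
    have b: "((\<lambda>p. - (bern_weight n p x * (f x - p))) has_integral - (f x * wt n x - wt n x * (real (card x) + 1) / (real n + 2))) {0..1}"
      using has_integral_neg[OF a] .
    have 1: "f x * wt n x - wt n x * (real (card x) + 1) / (real n + 2) \<le> J x"
      by (rule has_integral_le[OF a IJ]) (auto intro!: mult_left_mono bw_nonneg)
    have 2: "- (f x * wt n x - wt n x * (real (card x) + 1) / (real n + 2)) \<le> J x"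
      by (rule has_integral_le[OF b IJ])
         (metis bw_nonneg abs_ge_minus_self minus_mult_right mult_left_mono)
    show ?thesis using 1 2 by linarith
  qed
  hence "(\<Sum>x\<in>cube n. \<bar>f x * wt n x - wt n x * (real (card x) + 1) / (real n + 2)\<bar>) \<le> (\<Sum>x\<in>cube n. J x)"
    by (intro sum_mono) auto
  with sJ show ?thesis by linarith
qed

definition Lv :: "nat \<Rightarrow> nat \<Rightarrow> nat set set" where
  "Lv n j = {x \<in> cube n. card x = j}"

lemma Lv_finite: "finite (Lv n j)"
  unfolding Lv_def using cube_finite by simp

lemma sum_levels: "(\<Sum>x\<in>cube n. h x) = (\<Sum>j\<le>n. \<Sum>x\<in>Lv n j. h x)"
  unfolding Lv_def
  by (rule sum.group[symmetric]) (auto simp: cube_finite cube_card)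

lemma card_Lv: "card (Lv n j) = n choose j"
proof -
  have "Lv n j = {B. B \<subseteq> {..<n} \<and> card B = j}" unfolding Lv_def cube_def by auto
  then show ?thesis using n_subsets[of "{..<n}" j] by simp
qed

lemma card_up:
  assumes X: "X \<in> Lv n j"
  shows "card {Y \<in> Lv n (j+s). X \<subseteq> Y} = (n - j) choose s"
proof -
  have Xs: "X \<subseteq> {..<n}" "card X = j" "finite X" using X unfolding Lv_def cube_def
    by (auto intro: finite_subset)
  have eq: "{Y \<in> Lv n (j+s). X \<subseteq> Y} = (\<lambda>Z. X \<union> Z) ` {Z. Z \<subseteq> {..<n} - X \<and> card Z = s}"
  proof (intro set_eqI iffI)
    fix Y assume Y: "Y \<in> {Y \<in> Lv n (j+s). X \<subseteq> Y}"
    hence "Y \<subseteq> {..<n}" "card Y = j + s" "X \<subseteq> Y" unfolding Lv_def cube_def by auto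
    moreover have "finite Y" using \<open>Y \<subseteq> {..<n}\<close> by (auto intro: finite_subset)
    ultimately have "Y - X \<subseteq> {..<n} - X" "card (Y - X) = s" "Y = X \<union> (Y - X)"
      using Xs by (auto simp: card_Diff_subset)
    then show "Y \<in> (\<lambda>Z. X \<union> Z) ` {Z. Z \<subseteq> {..<n} - X \<and> card Z = s}" by blast
  next
    fix Y assume "Y \<in> (\<lambda>Z. X \<union> Z) ` {Z. Z \<subseteq> {..<n} - X \<and> card Z = s}"
    then obtain Z where Z: "Z \<subseteq> {..<n} - X" "card Z = s" "Y = X \<union> Z" by blast
    have "finite Z" using Z(1) by (auto intro: finite_subset)
    have "card (X \<union> Z) = card X + card Z"
      by (rule card_Un_disjoint) (use Z Xs \<open>finite Z\<close> in auto)
    hence "card Y = j + s" using Z Xs by simp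
    then show "Y \<in> {Y \<in> Lv n (j+s). X \<subseteq> Y}" using Z Xs unfolding Lv_def cube_def by auto
  qed
  have inj: "inj_on (\<lambda>Z. X \<union> Z) {Z. Z \<subseteq> {..<n} - X \<and> card Z = s}"
    by (rule inj_onI) blast
  have "card {Z. Z \<subseteq> {..<n} - X \<and> card Z = s} = (n - j) choose s"
    using n_subsets[of "{..<n} - X" s] Xs by (simp add: card_Diff_subset)
  then show ?thesis unfolding eq card_image[OF inj] .
qed

lemma card_down:
  assumes Y: "Y \<in> Lv n (j+s)"
  shows "card {X \<in> Lv n j. X \<subseteq> Y} = (j + s) choose j"
proof -
  have Ys: "Y \<subseteq> {..<n}" "card Y = j + s" "finite Y" using Y unfolding Lv_def cube_def
    by (auto intro: finite_subset)
  have "{X \<in> Lv n j. X \<subseteq> Y} = {X. X \<subseteq> Y \<and> card X = j}"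
    using Ys unfolding Lv_def cube_def by auto
  then show ?thesis using n_subsets[of Y j] Ys by simp
qed

lemma double_count_up:
  "(\<Sum>X\<in>Lv n j. \<Sum>Y\<in>{Y \<in> Lv n (j+s). X \<subseteq> Y}. h X) = real ((n - j) choose s) * (\<Sum>X\<in>Lv n j. h X)"
  by (simp add: card_up sum_distrib_left)

lemma double_count_down:
  "(\<Sum>X\<in>Lv n j. \<Sum>Y\<in>{Y \<in> Lv n (j+s). X \<subseteq> Y}. h Y) = real ((j + s) choose j) * (\<Sum>Y\<in>Lv n (j+s). h Y)"
proof -
  have "(\<Sum>X\<in>Lv n j. \<Sum>Y\<in>{Y \<in> Lv n (j+s). X \<subseteq> Y}. h Y) = (\<Sum>Y\<in>Lv n (j+s). \<Sum>X\<in>{X \<in> Lv n j. X \<subseteq> Y}. h Y)"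
    by (rule sum.swap_restrict) (auto simp: Lv_finite)
  also have "\<dots> = real ((j + s) choose j) * (\<Sum>Y\<in>Lv n (j+s). h Y)"
    by (simp add: card_down sum_distrib_left)
  finally show ?thesis .
qed


lemma sens_ge:
  assumes "X \<in> cube n" "Y \<in> cube n" "real (hamming X Y) \<le> of_int \<lfloor>\<eta> * real n\<rfloor>"
  shows "\<bar>f Y - f X\<bar> \<le> sens n \<eta> f X"
  unfolding sens_def
  by (rule Max_ge) (use assms cube_finite in auto)

lemma sens_nonneg:
  assumes "X \<in> cube n" "0 \<le> \<lfloor>\<eta> * real n\<rfloor>"
  shows "0 \<le> sens n \<eta> f X"
  using sens_ge[OF assms(1) assms(1), of \<eta> f] assms by (simp add: hamming_def)

lemma level_ineq:
  assumes js: "j + s \<le> n" and sk: "real s \<le> of_int \<lfloor>\<eta> * real n\<rfloor>"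
  shows "\<bar>(\<Sum>x\<in>Lv n (j+s). f x) / real (n choose (j+s)) - (\<Sum>x\<in>Lv n j. f x) / real (n choose j)\<bar>
         \<le> (\<Sum>x\<in>Lv n j. sens n \<eta> f x) / real (n choose j)"
proof -
  define a where "a = real (n choose j)"
  define b where "b = real ((n - j) choose s)"
  define c where "c = real (n choose (j+s))"
  define d where "d = real ((j+s) choose j)"
  have abcd: "a * b = c * d"
    using choose_mult[of j "j+s" n] js unfolding a_def b_def c_def d_def
    by (metis add_diff_cancel_left' le_add1 of_nat_mult)
  have pos: "a > 0" "b > 0" "c > 0" "d > 0"
    unfolding a_def b_def c_def d_def using js by auto
  define U where "U X = {Y \<in> Lv n (j+s). X \<subseteq> Y}" for X
  define A where "A = (\<Sum>X\<in>Lv n j. \<Sum>Y\<in>U X. f Y - f X)"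
  have A_eq: "A = d * (\<Sum>x\<in>Lv n (j+s). f x) - b * (\<Sum>x\<in>Lv n j. f x)"
    unfolding A_def U_def sum_subtractf double_count_up double_count_down b_def d_def ..
  have "\<bar>A\<bar> \<le> (\<Sum>X\<in>Lv n j. \<Sum>Y\<in>U X. \<bar>f Y - f X\<bar>)"
    unfolding A_def by (rule order_trans[OF sum_abs]) (intro sum_mono sum_abs)
  also have "\<dots> \<le> (\<Sum>X\<in>Lv n j. \<Sum>Y\<in>U X. sens n \<eta> f X)"
  proof (intro sum_mono)
    fix X Y assume X: "X \<in> Lv n j" and Y: "Y \<in> U X"
    have "hamming X Y = s"
    proof -
      have "finite Y" "X \<subseteq> Y" "card Y = j + s" "card X = j"
        using X Y unfolding U_def Lv_def cube_def by (auto intro: finite_subset)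
      moreover have "(X - Y) \<union> (Y - X) = Y - X" using \<open>X \<subseteq> Y\<close> by auto
      moreover have "card (Y - X) = card Y - card X"
        using \<open>finite Y\<close> \<open>X \<subseteq> Y\<close> by (meson card_Diff_subset finite_subset)
      ultimately show ?thesis unfolding hamming_def by simp
    qed
    then show "\<bar>f Y - f X\<bar> \<le> sens n \<eta> f X"
      using X Y sk by (intro sens_ge) (auto simp: U_def Lv_def)
  qed
  also have "\<dots> = b * (\<Sum>x\<in>Lv n j. sens n \<eta> f x)"
    unfolding U_def double_count_up b_def ..
  finally have Ab: "\<bar>A\<bar> \<le> b * (\<Sum>x\<in>Lv n j. sens n \<eta> f x)" .
  have "(\<Sum>x\<in>Lv n (j+s). f x) / c - (\<Sum>x\<in>Lv n j. f x) / a = A / (a * b)"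
    unfolding A_eq using pos abcd by (simp add: field_simps)
  hence "\<bar>(\<Sum>x\<in>Lv n (j+s). f x) / c - (\<Sum>x\<in>Lv n j. f x) / a\<bar> = \<bar>A\<bar> / (a * b)"
    using pos by simp
  also have "\<dots> \<le> b * (\<Sum>x\<in>Lv n j. sens n \<eta> f x) / (a * b)"
    using Ab pos by (intro divide_right_mono) auto
  also have "\<dots> = (\<Sum>x\<in>Lv n j. sens n \<eta> f x) / a"
    using pos by simp
  finally show ?thesis unfolding a_def c_def .
qed



lemma telescope_steps:
  fixes F G :: "nat \<Rightarrow> real" and s n j t :: nat
  assumes step: "\<forall>j. j + s \<le> n \<longrightarrow> F (j+s) - F j \<le> G j"
  shows "j + t* s \<le> n \<longrightarrow> F (j + t* s) - F j \<le> (\<Sum>i<t. G (j + i* s))"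
proof (induction t)
  case 0 then show ?case by simp
next
  case (Suc t)
  show ?case
  proof
    assume a: "j + Suc t * s \<le> n"
    have "F (j + Suc t * s) - F j = (F (j + t* s + s) - F (j + t* s)) + (F (j + t* s) - F j)"
      by (simp add: algebra_simps)
    also have "\<dots> \<le> G (j + t* s) + (\<Sum>i<t. G (j + i* s))"
    proof (rule add_mono)
      have s1: "j + t* s + s \<le> n" using a by (simp add: algebra_simps)
      then show "F (j + t* s + s) - F (j + t* s) \<le> G (j + t* s)" using step by blast
      have "j + t* s \<le> n" using s1 by simp
      then show "F (j + t* s) - F j \<le> (\<Sum>i<t. G (j + i* s))" using Suc.IH by blast
    qed
    finally show "F (j + Suc t * s) - F j \<le> (\<Sum>i<Suc t. G (j + i* s))" by (simp add: add.commute)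
  qed
qed

lemma shift_sum_le:
  fixes G :: "nat \<Rightarrow> real"
  assumes nn: "\<And>j. j \<le> n \<Longrightarrow> 0 \<le> G j" and m: "m + a \<le> n"
  shows "(\<Sum>j\<le>m. G (j + a)) \<le> (\<Sum>j\<le>n. G j)"
proof -
  have "(\<Sum>j\<le>m. G (j + a)) = (\<Sum>j\<in>(\<lambda>j. j + a) ` {..m}. G j)"
    by (subst sum.reindex) (auto simp: inj_on_def)
  also have "\<dots> \<le> (\<Sum>j\<le>n. G j)"
    by (rule sum_mono2) (use m nn in auto)
  finally show ?thesis .
qed

lemma chain1d:
  fixes F G :: "nat \<Rightarrow> real"
  assumes step: "\<And>j. j + s \<le> n \<Longrightarrow> F (j+s) - F j \<le> G j"
    and nn: "\<And>j. j \<le> n \<Longrightarrow> 0 \<le> G j"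
    and ts: "t * s \<le> n"
  shows "(\<Sum>j\<le>n - t* s. F (j + t* s) - F j) \<le> real t * (\<Sum>j\<le>n. G j)"
proof -
  have "(\<Sum>j\<le>n - t* s. F (j + t* s) - F j) \<le> (\<Sum>j\<le>n - t* s. \<Sum>i<t. G (j + i* s))"
  proof (intro sum_mono)
    fix j assume "j \<in> {..n - t* s}"
    hence "j + t* s \<le> n" using ts by auto
    then show "F (j + t* s) - F j \<le> (\<Sum>i<t. G (j + i* s))"
      using telescope_steps[of s n F G j t] step by blast
  qed
  also have "\<dots> = (\<Sum>i<t. \<Sum>j\<le>n - t* s. G (j + i* s))"
    by (rule sum.swap)
  also have "\<dots> \<le> (\<Sum>i<t. \<Sum>j\<le>n. G j)"
  proof (intro sum_mono shift_sum_le nn)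
    fix i assume "i \<in> {..<t}"
    hence "i * s \<le> t * s" by simp
    then show "n - t * s + i * s \<le> n" using ts by linarith
  qed
  also have "\<dots> = real t * (\<Sum>j\<le>n. G j)" by simp
  finally show ?thesis .
qed

lemma oned:
  fixes F G :: "nat \<Rightarrow> real"
  assumes step: "\<And>j. j + s \<le> n \<Longrightarrow> F (j+s) - F j \<le> G j"
    and nn: "\<And>j. j \<le> n \<Longrightarrow> 0 \<le> G j"
    and D: "(\<Sum>j\<le>n. \<bar>F j - (real j + 1) / (real n + 2)\<bar>) \<le> E"
    and s1: "1 \<le> s" and s2: "2 * s \<le> n"
  shows "real s / 4 - 8 * E * real s / real n \<le> (\<Sum>j\<le>n. G j)"
proof -
  define t where "t = n div (2 * s)"
  have t1: "1 \<le> t" unfolding t_def using div_le_mono[OF s2, of "2* s"] s1 by simp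
  have m0: "0 < 2 * s" using s1 by simp
  have dm: "n = t * (2 * s) + n mod (2 * s)" unfolding t_def by (metis div_mult_mod_eq)
  have ml: "n mod (2 * s) < 2 * s" using m0 by simp
  have tsn: "2 * (t * s) \<le> n" using dm by (simp add: algebra_simps)
  have tlow: "real n \<le> 4 * real t * real s"
  proof -
    have h: "1 * s \<le> t * s" using t1 by (rule mult_right_mono) simp
    have e: "t*(2* s) = 2*(t* s)" by simp
    have dm': "n = 2*(t* s) + n mod (2* s)" by (metis dm e)
    have "n \<le> 4 * (t * s)" using dm' ml h by linarith
    then have "real n \<le> 4 * (real t * real s)" by (metis of_nat_le_iff of_nat_mult of_nat_numeral)
    then show ?thesis by (simp add: mult.assoc)
  qed
  have "0 \<le> (\<Sum>j\<le>n. \<bar>F j - (real j + 1) / (real n + 2)\<bar>)" by (rule sum_nonneg) simp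
  hence E0: "0 \<le> E" using D by linarith
  define \<mu> where "\<mu> j = (real j + 1) / (real n + 2)" for j
  define d where "d j = F j - \<mu> j" for j
  let ?m = "n - t* s"
  have "(\<Sum>j\<le>?m. F (j + t* s) - F j) = (\<Sum>j\<le>?m. (\<mu> (j + t* s) - \<mu> j)) + (\<Sum>j\<le>?m. d (j + t* s)) - (\<Sum>j\<le>?m. d j)"
    unfolding d_def by (simp add: sum_subtractf sum.distrib algebra_simps)
  also have "(\<Sum>j\<le>?m. (\<mu> (j + t* s) - \<mu> j)) = real (?m + 1) * (real (t* s) / (real n + 2))"
    unfolding \<mu>_def by (simp add: diff_divide_distrib[symmetric])
  finally have eq: "(\<Sum>j\<le>?m. F (j + t* s) - F j) = real (?m + 1) * (real (t* s) / (real n + 2)) + (\<Sum>j\<le>?m. d (j + t* s)) - (\<Sum>j\<le>?m. d j)" .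
  have dsum: "(\<Sum>j\<le>n. \<bar>d j\<bar>) \<le> E" using D unfolding d_def \<mu>_def .
  have d1: "\<bar>\<Sum>j\<le>?m. d (j + t* s)\<bar> \<le> E"
    using order_trans[OF sum_abs shift_sum_le[of n "\<lambda>j. \<bar>d j\<bar>" ?m "t* s"]] dsum tsn by force
  have d2: "\<bar>\<Sum>j\<le>?m. d j\<bar> \<le> E"
    using order_trans[OF sum_abs shift_sum_le[of n "\<lambda>j. \<bar>d j\<bar>" ?m 0]] dsum tsn by force
  have main: "real (?m + 1) * (real (t* s) / (real n + 2)) \<ge> real (t* s) / 4"
  proof -
    have "real n \<ge> 2" using s1 s2 by simp
    have "real (?m + 1) \<ge> real n / 2" using tsn by linarith
    moreover have "real n / 2 * (real (t* s) / (real n + 2)) \<ge> real (t* s) / 4"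
    proof -
      have "2 * real (t* s) \<le> real n * real (t* s)"
        using \<open>real n \<ge> 2\<close> by (intro mult_right_mono) auto
      then show ?thesis by (simp add: field_simps)
    qed
    ultimately show ?thesis
      by (meson order_trans mult_right_mono divide_nonneg_nonneg of_nat_0_le_iff add_nonneg_nonneg zero_le_numeral)
  qed
  have "real (t* s) / 4 - 2 * E \<le> real t * (\<Sum>j\<le>n. G j)"
    using chain1d[where F=F and G=G and s=s and n=n and t=t, OF step nn] tsn eq d1 d2 main by linarith
  hence "real s / 4 - 2 * E / real t \<le> (\<Sum>j\<le>n. G j)"
    using t1 by (simp add: field_simps)
  moreover have "2 * E / real t \<le> 8 * E * real s / real n"
  proof -
    have "real n > 0" using s1 s2 by simp
    have "2 * E * real n \<le> 8 * E * real s * real t"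
      using mult_left_mono[OF tlow, of "2 * E"] E0 by (simp add: algebra_simps)
    then show ?thesis using t1 \<open>real n > 0\<close> by (simp add: field_simps)
  qed
  ultimately show ?thesis by linarith
qed


lemma aux1: "(x::real) \<noteq> 0 \<Longrightarrow> y \<noteq> 0 \<Longrightarrow> z \<noteq> 0 \<Longrightarrow> x / y / (z * x) = 1 / (z * y)"
  by (simp add: field_simps)

lemma aux2: "(b::real) \<noteq> 0 \<Longrightarrow> N \<noteq> 0 \<Longrightarrow> S / (N * b) - b * (m / (N * b)) = (S / b - m) / N"
  by (simp add: field_simps)

lemma wt_Lv: "x \<in> Lv n j \<Longrightarrow> wt n x = 1 / ((real n + 1) * real (n choose j))"
proof -
  assume x: "x \<in> Lv n j"
  hence cx: "card x = j" "j \<le> n" unfolding Lv_def using cube_card by auto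
  have "fact j * fact (n - j) * real (n choose j) = fact n"
    using binomial_fact_lemma[OF cx(2)] by (metis of_nat_fact of_nat_mult)
  moreover have "(fact (n+1) :: real) = (real n + 1) * fact n" by simp
  moreover have Cp: "real (n choose j) > 0" using cx by simp
  ultimately have a: "(fact j * fact (n - j) :: real) = fact n / real (n choose j)"
    by (simp add: field_simps)
  have fp: "(fact n :: real) > 0" by simp
  have "(fact j * fact (n - j) :: real) / fact (n + 1) = fact n / real (n choose j) / ((real n + 1) * fact n)"
    unfolding a by simp
  also have "\<dots> = 1 / ((real n + 1) * real (n choose j))"
    by (rule aux1) (use fp Cp in auto)
  finally show ?thesis unfolding wt_def cx(1) .
qed

lemma key_bound:
  fixes f :: "nat set \<Rightarrow> real" and C :: real and n K :: nat and \<eta> :: real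
  assumes hyp: "\<forall>p\<in>{0..1}. bern_exp n p (\<lambda>x. \<bar>f x - p\<bar>) \<le> C / sqrt (real n)"
    and n2: "2 \<le> n" and Ksq: "128 * C \<le> sqrt (real n)"
    and K: "real K = of_int \<lfloor>\<eta> * real n\<rfloor>" "1 \<le> K" "K < n"
  shows "real K / (16 * (real n + 1)) \<le> (SUP p\<in>{0..1::real}. bern_exp n p (sens n \<eta> f))"
proof -
  define s where "s = min K (n div 2)"
  have s1: "1 \<le> s" and s2: "2 * s \<le> n" and sK: "real s \<le> of_int \<lfloor>\<eta> * real n\<rfloor>" and Ks: "K \<le> 2 * s"
    using K n2 unfolding s_def by auto
  define bc where "bc j = real (n choose j)" for j
  have bcpos: "j \<le> n \<Longrightarrow> bc j > 0" for j unfolding bc_def by simp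
  define F where "F j = (\<Sum>x\<in>Lv n j. f x) / bc j" for j
  define G where "G j = (\<Sum>x\<in>Lv n j. sens n \<eta> f x) / bc j" for j
  have step: "F (j+s) - F j \<le> G j" if "j + s \<le> n" for j
    using level_ineq[OF that sK, of f] unfolding F_def G_def bc_def by linarith
  have kpos: "0 \<le> \<lfloor>\<eta> * real n\<rfloor>" using K by linarith
  have nn: "0 \<le> G j" if "j \<le> n" for j
    unfolding G_def using bcpos[OF that]
    by (intro divide_nonneg_pos sum_nonneg sens_nonneg kpos) (auto simp: Lv_def)
  define E where "E = (real n + 1) * (C / sqrt (real n))"
  have D: "(\<Sum>j\<le>n. \<bar>F j - (real j + 1) / (real n + 2)\<bar>) \<le> E"
  proof -
    have lev: "\<bar>F j - (real j + 1) / (real n + 2)\<bar> / (real n + 1)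
       \<le> (\<Sum>x\<in>Lv n j. \<bar>f x * wt n x - wt n x * (real (card x) + 1) / (real n + 2)\<bar>)" if j: "j \<le> n" for j
    proof -
      have "(\<Sum>x\<in>Lv n j. f x * wt n x - wt n x * (real (card x) + 1) / (real n + 2))
          = (\<Sum>x\<in>Lv n j. f x / ((real n + 1) * bc j) - (real j + 1) / (real n + 2) / ((real n + 1) * bc j))"
        by (intro sum.cong refl) (auto simp: wt_Lv bc_def Lv_def)
      also have "\<dots> = (F j - (real j + 1) / (real n + 2)) / (real n + 1)"
      proof -
        have bp: "bc j > 0" using bcpos[OF j] .
        have "(\<Sum>x\<in>Lv n j. f x / ((real n + 1) * bc j) - (real j + 1) / (real n + 2) / ((real n + 1) * bc j))
           = (\<Sum>x\<in>Lv n j. f x) / ((real n + 1) * bc j) - bc j * (((real j + 1) / (real n + 2)) / ((real n + 1) * bc j))"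
          unfolding sum_subtractf sum_divide_distrib[symmetric] by (simp add: card_Lv bc_def)
        also have "\<dots> = (F j - (real j + 1) / (real n + 2)) / (real n + 1)"
          unfolding F_def using bp by (intro aux2) auto
        finally show ?thesis .
      qed
      finally have "\<bar>F j - (real j + 1) / (real n + 2)\<bar> / (real n + 1) =
          \<bar>\<Sum>x\<in>Lv n j. f x * wt n x - wt n x * (real (card x) + 1) / (real n + 2)\<bar>"
        by simp
      also have "\<dots> \<le> (\<Sum>x\<in>Lv n j. \<bar>f x * wt n x - wt n x * (real (card x) + 1) / (real n + 2)\<bar>)"
        by (rule sum_abs)
      finally show ?thesis .
    qed
    have "(\<Sum>j\<le>n. \<bar>F j - (real j + 1) / (real n + 2)\<bar>) / (real n + 1)
        = (\<Sum>j\<le>n. \<bar>F j - (real j + 1) / (real n + 2)\<bar> / (real n + 1))"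
      by (rule sum_divide_distrib)
    also have "\<dots> \<le> (\<Sum>j\<le>n. \<Sum>x\<in>Lv n j. \<bar>f x * wt n x - wt n x * (real (card x) + 1) / (real n + 2)\<bar>)"
      by (intro sum_mono lev) auto
    also have "\<dots> = (\<Sum>x\<in>cube n. \<bar>f x * wt n x - wt n x * (real (card x) + 1) / (real n + 2)\<bar>)"
      by (rule sum_levels[symmetric])
    also have "\<dots> \<le> C / sqrt (real n)" by (rule hyp_int[OF hyp])
    finally show ?thesis unfolding E_def by (simp add: field_simps)
  qed
  have one: "real s / 4 - 8 * E * real s / real n \<le> (\<Sum>j\<le>n. G j)"
    by (rule oned[where F=F and G=G and s=s and n=n and E=E, OF step nn D s1 s2])
  have Eb: "8 * E * real s / real n \<le> real s / 8"
  proof -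
    have sq: "sqrt (real n) > 0" "sqrt (real n) * sqrt (real n) = real n" using n2 by auto
    have C0: "C \<le> sqrt (real n) / 128" using Ksq by simp
    have "8 * E * real s / real n = 8 * (real n + 1) * C * real s / (real n * sqrt (real n))"
      unfolding E_def using sq by (simp add: field_simps)
    also have "\<dots> \<le> 8 * (real n + 1) * (sqrt (real n) / 128) * real s / (real n * sqrt (real n))"
      using sq n2 C0 by (intro divide_right_mono mult_right_mono mult_left_mono) auto
    also have "\<dots> = (real n + 1) * real s / (16 * real n)"
      using sq n2 by (simp add: field_simps)
    also have "\<dots> \<le> real s / 8"
    proof -
      have "1 * real s \<le> real n * real s" using n2 by (intro mult_right_mono) auto
      then show ?thesis using n2 by (simp add: field_simps)
    qed
    finally show ?thesis .
  qed
  have sumG: "real K / 16 \<le> (\<Sum>j\<le>n. G j)"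
    using one Eb Ks by linarith
  have "(\<Sum>x\<in>cube n. wt n x * sens n \<eta> f x) = (\<Sum>j\<le>n. \<Sum>x\<in>Lv n j. wt n x * sens n \<eta> f x)"
    by (rule sum_levels)
  also have "\<dots> = (\<Sum>j\<le>n. G j / (real n + 1))"
  proof (intro sum.cong refl)
    fix j assume "j \<in> {..n}"
    have "(\<Sum>x\<in>Lv n j. wt n x * sens n \<eta> f x) = (\<Sum>x\<in>Lv n j. sens n \<eta> f x / ((real n + 1) * bc j))"
      by (intro sum.cong refl) (auto simp: wt_Lv bc_def)
    then show "(\<Sum>x\<in>Lv n j. wt n x * sens n \<eta> f x) = G j / (real n + 1)"
      unfolding G_def by (simp add: sum_divide_distrib[symmetric] field_simps)
  qed
  also have "\<dots> = (\<Sum>j\<le>n. G j) / (real n + 1)" by (simp add: sum_divide_distrib)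
  finally have "(\<Sum>j\<le>n. G j) / (real n + 1) \<le> (SUP p\<in>{0..1::real}. bern_exp n p (sens n \<eta> f))"
    using sup_ge_int[of n "sens n \<eta> f"] sens_nonneg kpos by metis
  moreover have "real K / (16 * (real n + 1)) \<le> (\<Sum>j\<le>n. G j) / (real n + 1)"
  proof -
    have "real K / 16 / (real n + 1) \<le> (\<Sum>j\<le>n. G j) / (real n + 1)"
      using sumG by (intro divide_right_mono) auto
    then show ?thesis by (simp add: divide_divide_eq_left mult.commute)
  qed
  ultimately show ?thesis by linarith
qed


theorem theorem4p1:
  fixes C_Bern :: real
  assumes "C_Bern > 0"
  shows "\<exists>c::real. c > 0 \<and> (\<exists>N0::nat. \<forall>n\<ge>N0. \<forall>f :: nat set \<Rightarrow> real.
           (\<forall>p\<in>{0..1}. bern_exp n p (\<lambda>x. \<bar>f x - p\<bar>) \<le> C_Bern / sqrt (real n)) \<longrightarrow>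
           (\<forall>\<eta>::real. 0 < \<eta> \<and> \<eta> < 1 \<and> \<lfloor>\<eta> * real n\<rfloor> \<ge> 1 \<longrightarrow>
              (SUP p\<in>{0..1::real}. bern_exp n p (sens n \<eta> f)) \<ge> c * \<eta>))"
proof (intro exI conjI allI impI)
  show "(1/64::real) > 0" by simp
  fix n :: nat and f :: "nat set \<Rightarrow> real" and \<eta> :: real
  assume nN: "max 2 (nat \<lceil>(128 * C_Bern)^2\<rceil>) \<le> n"
    and hyp: "\<forall>p\<in>{0..1}. bern_exp n p (\<lambda>x. \<bar>f x - p\<bar>) \<le> C_Bern / sqrt (real n)"
    and eta: "0 < \<eta> \<and> \<eta> < 1 \<and> \<lfloor>\<eta> * real n\<rfloor> \<ge> 1"
  have n2: "2 \<le> n" using nN by simp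
  have "(128 * C_Bern)^2 \<le> real n"
  proof -
    have "nat \<lceil>(128 * C_Bern)^2\<rceil> \<le> n" using nN by simp
    hence "\<lceil>(128 * C_Bern)^2\<rceil> \<le> int n" by linarith
    thus ?thesis by linarith
  qed
  hence Ksq: "128 * C_Bern \<le> sqrt (real n)" by (rule real_le_rsqrt)
  define K where "K = nat \<lfloor>\<eta> * real n\<rfloor>"
  have K1: "real K = of_int \<lfloor>\<eta> * real n\<rfloor>" unfolding K_def using eta by simp
  have K2: "1 \<le> K"
  proof -
    have "int 1 \<le> \<lfloor>\<eta> * real n\<rfloor>" using eta by simp
    then show ?thesis unfolding K_def by (simp only: le_nat_iff)
  qed
  have "real K \<le> \<eta> * real n" using K1 by linarith
  also have "\<dots> < real n" using eta n2 by simp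
  finally have K3: "K < n" by simp
  have bound: "real K / (16 * (real n + 1)) \<le> (SUP p\<in>{0..1::real}. bern_exp n p (sens n \<eta> f))"
    by (rule key_bound[OF hyp n2 Ksq K1 K2 K3])
  have "\<eta> * real n < real K + 1" using K1 by linarith
  moreover have "\<eta> * 1 \<le> \<eta> * real n" using eta n2 by (intro mult_left_mono) auto
  moreover have "\<eta> * (real n + 1) = \<eta> * real n + \<eta>" by (simp add: algebra_simps)
  moreover have "1 \<le> real K" using K2 by simp
  ultimately have "\<eta> * (real n + 1) \<le> 4 * real K" by linarith
  hence "1/64 * \<eta> \<le> real K / (16 * (real n + 1))"
    by (simp add: field_simps)
  with bound show "1/64 * \<eta> \<le> (SUP p\<in>{0..1::real}. bern_exp n p (sens n \<eta> f))" by linarith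
qed

end
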